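(* Let $p>2$, and let $F$, $a$, $K$, $G=\langle\sigma\rangle$, $J$, $J_i$, $N$, $M_\gamma$ be as in the context. Let $\gamma\in K^\times$ with $[\gamma]\neq[1]$, and let $l=\dim_{\mathbb{F}_p}M_\gamma$ (so $[\gamma]\in J_l\setminus J_{l-1}$). (a) If $3\le l\le p$, then there exists $[\alpha]\in J$ such that $\langle N([\alpha])\rangle = M_\gamma^G$. (b) If $l=2$ and $\gamma$ cannot be written as $\gamma=(\sqrt[p]{a})^{r}\gamma_1$ with $r\in\mathbb{Z}$ and $[\gamma_1]\in J_1$, then there exist $t\in\mathbb{Z}$ and $[\alpha]\in J$ such that $\langle N([\alpha])\rangle = \big(M_{(\sqrt[p]{a})^{t}\gamma}\big)^G$.
   Context: Let $p$ be a prime and $F$ a field of characteristic different from $p$ containing a primitive $p$th root of unity $\xi_p$. Let $a\in F^\times\setminus F^{\times p}$, fix a $p$th root $\sqrt[p]{a}$, and let $K=F(\sqrt[p]{a})$; $K^\times=K\setminus\{0\}$. Let $G=\mathrm{Gal}(K/F)=\langle\sigma\rangle$, where $\sigma(\sqrt[p]{a})/\sqrt[p]{a}=\xi_p$. Let $J=K^\times/K^{\times p}$, an $\mathbb{F}_p[G]$-module with elements $[\gamma]$, $\gamma\in K^\times$. Let $N=1+\sigma+\dots+\sigma^{p-1}$, acting on $J$. For $i\ge1$ let $J_i=\ker\big((\sigma-1)^i\colon J\to J\big)$, and $J_0=\{0\}$. For $\gamma\in K^\times$ with $[\gamma]\in J_i\setminus J_{i-1}$, let $\gamma_j=\gamma^{(\sigma-1)^j}$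 and $M_\gamma=\langle[\gamma],[\gamma_1],\dots,[\gamma_{i-1}]\rangle$, the cyclic $\mathbb{F}_p[G]$-submodule of $J$ generated by $[\gamma]$; it has $\mathbb{F}_p$-dimension $i$. $\langle\cdot\rangle$ denotes $\mathbb{F}_p$-span and $V^G$ the $G$-fixed submodule. *)

theory Defs
  imports Main "HOL-Computational_Algebra.Primes"
begin

text \<open>The whole type 'k plays the role of K = F(\<theta>); F is a subfield given as a set.\<close>

definition is_subfield :: "'k::field set \<Rightarrow> bool" where
  "is_subfield L \<longleftrightarrow> 0 \<in> L \<and> 1 \<in> L \<and>
     (\<forall>x\<in>L. \<forall>y\<in>L. x + y \<in> L \<and> x * y \<in> L) \<and>
     (\<forall>x\<in>L. - x \<in> L \<and> inverse x \<in> L)"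

definition gen_field :: "'k::field set \<Rightarrow> 'k \<Rightarrow> 'k set" where
  "gen_field F \<theta> = \<Inter>{L. is_subfield L \<and> F \<subseteq> L \<and> \<theta> \<in> L}"

text \<open>Classes in J = K^x / K^x^p: [x] = [y] iff x = y * e^p for some nonzero e.\<close>
definition same_class :: "nat \<Rightarrow> 'k::field \<Rightarrow> 'k \<Rightarrow> bool" where
  "same_class p x y \<longleftrightarrow> (\<exists>e. e \<noteq> 0 \<and> x = y * e ^ p)"

text \<open>Preimage in K^x of the F_p-span in J of the classes of the (nonzero) elements of S.
  (J is written multiplicatively and has exponent p, so the F_p-span is the submonoid
  generated by the classes, together with the trivial class.)\<close>
inductive_set pspan :: "nat \<Rightarrow> 'k::field set \<Rightarrow> 'k set" for p S where
  gen: "s \<in> S \<Longrightarrow> s \<noteq> 0 \<Longrightarrow> s \<in> pspan p S"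
| pw:  "e \<noteq> 0 \<Longrightarrow> e ^ p \<in> pspan p S"
| mult: "x \<in> pspan p S \<Longrightarrow> y \<in> pspan p S \<Longrightarrow> x * y \<in> pspan p S"

text \<open>(\<sigma>-1)^j acting on representatives: \<gamma>_j.\<close>
definition sigma_minus_one_pow :: "('k::field \<Rightarrow> 'k) \<Rightarrow> nat \<Rightarrow> 'k \<Rightarrow> 'k" where
  "sigma_minus_one_pow \<sigma> j = ((\<lambda>x. \<sigma> x / x) ^^ j)"

text \<open>The norm N = 1 + \<sigma> + ... + \<sigma>^(p-1), multiplicatively.\<close>
definition normK :: "nat \<Rightarrow> ('k::field \<Rightarrow> 'k) \<Rightarrow> 'k \<Rightarrow> 'k" where
  "normK p \<sigma> x = (\<Prod>i<p. (\<sigma> ^^ i) x)"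

text \<open>Preimage of the cyclic F_p[G]-submodule M_x of J generated by [x].\<close>
definition cycmod :: "nat \<Rightarrow> ('k::field \<Rightarrow> 'k) \<Rightarrow> 'k \<Rightarrow> 'k set" where
  "cycmod p \<sigma> x = pspan p (range (\<lambda>i. (\<sigma> ^^ i) x))"

text \<open>Preimage of the G-fixed part M_x^G.\<close>
definition cycmod_fix :: "nat \<Rightarrow> ('k::field \<Rightarrow> 'k) \<Rightarrow> 'k \<Rightarrow> 'k set" where
  "cycmod_fix p \<sigma> x = {y \<in> cycmod p \<sigma> x. same_class p (\<sigma> y) y}"

end

theory Submission imports Defs "HOL-Computational_Algebra.Polynomial" begin

lemma roots_card:
  fixes p :: nat assumes "p > 0"
  shows "finite {z::'k::field. z^p = 1} \<and> card {z::'k::field. z^p = 1} \<le> p"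
proof -
  let ?q = "monom (1::'k) p + [:-1:]"
  have d: "degree ?q = p" using assms
    by (subst degree_add_eq_left) (auto simp: degree_monom_eq)
  have nz: "?q \<noteq> 0" using d assms by auto
  have e: "{z::'k. z^p = 1} = {x. poly ?q x = 0}" by (auto simp: poly_monom)
  show ?thesis unfolding e using poly_roots_finite[OF nz] card_poly_roots_bound[OF nz] d by simp
qed

lemma pspan_nz: "y \<in> pspan p S \<Longrightarrow> y \<noteq> (0::'k::field)"
  by (induction rule: pspan.induct) auto

lemma pspan_one: "(1::'k::field) \<in> pspan p S"
  using pspan.pw[of "1::'k" p S] by simp

lemma pspan_class: "y \<in> pspan p S \<Longrightarrow> e \<noteq> 0 \<Longrightarrow> y * e ^ p \<in> pspan p (S::'k::field set)"
  by (rule pspan.mult) (auto intro: pspan.pw)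

lemma pspan_pow: "y \<in> pspan p S \<Longrightarrow> y ^ n \<in> pspan p (S::'k::field set)"
  by (induction n) (auto intro: pspan.mult pspan_one)

lemma pspan_inv:
  assumes "p > 0" shows "y \<in> pspan p S \<Longrightarrow> inverse y \<in> pspan p (S::'k::field set)"
proof (induction rule: pspan.induct)
  case (gen s)
  have "inverse s = s ^ (p - 1) * (inverse s) ^ p"
  proof -
    obtain q where q: "p = Suc q" using assms by (cases p) auto
    have "s ^ q * inverse s ^ q = 1" using gen by (simp add: power_mult_distrib[symmetric])
    then show ?thesis using q gen by (simp add: mult.assoc[symmetric])
  qed
  moreover have "s ^ (p - 1) \<in> pspan p S" by (rule pspan_pow[OF pspan.gen[OF gen]])
  then have "s ^ (p - 1) * (inverse s) ^ p \<in> pspan p S" by (rule pspan_class) (use gen in auto)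
  ultimately show ?case by simp
next
  case (pw e) then show ?case using pspan.pw[of "inverse e" p S] by (simp add: power_inverse)
next
  case (mult x y) then show ?case by (simp add: pspan.mult)
qed

lemma pspan_mono:
  assumes "\<And>s. s \<in> S \<Longrightarrow> s \<noteq> 0 \<Longrightarrow> s \<in> pspan p S'"
  shows "y \<in> pspan p S \<Longrightarrow> y \<in> pspan p (S'::'k::field set)"
  by (induction rule: pspan.induct) (auto intro: assms pspan.pw pspan.mult)

lemma pspan_map:
  fixes h :: "'k::field \<Rightarrow> 'k"
  assumes hm: "\<And>x y. h (x * y) = h x * h y" and hp: "\<And>e. h (e ^ p) = h e ^ p"
    and hn: "\<And>e. e \<noteq> 0 \<Longrightarrow> h e \<noteq> 0"
    and hs: "\<And>s. s \<in> S \<Longrightarrow> s \<noteq> 0 \<Longrightarrow> h s \<in> pspan p S'"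
  shows "y \<in> pspan p S \<Longrightarrow> h y \<in> pspan p S'"
  by (induction rule: pspan.induct) (auto intro: hs pspan.pw pspan.mult simp: hm hp hn)

lemma pspan_empty: "y \<in> pspan p {} \<Longrightarrow> \<exists>e. e \<noteq> 0 \<and> y = (e::'k::field) ^ p"
proof (induction rule: pspan.induct)
  case (mult x y)
  then obtain e1 e2 where "e1 \<noteq> 0" "x = e1 ^ p" "e2 \<noteq> 0" "y = e2 ^ p" by blast
  then show ?case by (intro exI[of _ "e1 * e2"]) (simp add: power_mult_distrib)
qed auto

lemma pspan_single_class:
  assumes "x = y * e ^ p" "e \<noteq> 0" "y \<noteq> (0::'k::field)" "p > 0"
  shows "pspan p {x} = pspan p {y}"
proof
  have x0: "x \<noteq> 0" using assms by simp
  have "y * e ^ p \<in> pspan p {y}" by (rule pspan_class) (use assms in \<open>auto intro: pspan.gen\<close>)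
  then show "pspan p {x} \<subseteq> pspan p {y}"
    using pspan_mono[of "{x}" p "{y}"] assms by auto
  have "x * (inverse e) ^ p \<in> pspan p {x}" by (rule pspan_class) (use x0 assms in \<open>auto intro: pspan.gen\<close>)
  moreover have "y = x * (inverse e) ^ p" using assms by (simp add: power_inverse)
  ultimately show "pspan p {y} \<subseteq> pspan p {x}"
    using pspan_mono[of "{y}" p "{x}"] by auto
qed

locale kum =
  fixes p :: nat and F :: "'k::field set" and \<xi> a \<theta> :: 'k and \<sigma> :: "'k \<Rightarrow> 'k"
  assumes p_prime: "prime p" and p_gt2: "p > 2"
    and F_sub: "is_subfield F"
    and char: "of_nat p \<noteq> (0::'k)"
    and xi_F: "\<xi> \<in> F" and xi_root: "\<xi> ^ p = 1" and xi_ne1: "\<xi> \<noteq> 1"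
    and a_ne0: "a \<noteq> 0"
    and theta: "\<theta> ^ p = a"
    and K_gen: "gen_field F \<theta> = UNIV"
    and sigma_add: "\<And>x y. \<sigma> (x + y) = \<sigma> x + \<sigma> y"
    and sigma_mult: "\<And>x y. \<sigma> (x * y) = \<sigma> x * \<sigma> y"
    and sigma_F: "\<And>c. c \<in> F \<Longrightarrow> \<sigma> c = c"
    and sigma_theta: "\<sigma> \<theta> = \<xi> * \<theta>"
begin

lemma p_pos: "p > 0" using p_gt2 by simp

lemma one_F: "1 \<in> F" using F_sub unfolding is_subfield_def by auto

lemma s0: "\<sigma> 0 = 0"
proof -
  have "\<sigma> 0 + \<sigma> 0 = \<sigma> 0 + 0" using sigma_add[of 0 0] by simp
  then show ?thesis by (rule add_left_imp_eq)
qed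

lemma s1: "\<sigma> 1 = 1" using sigma_F one_F by simp

lemma sinv: "\<sigma> (inverse x) = inverse (\<sigma> x)"
proof (cases "x = 0")
  case True then show ?thesis by (simp add: s0)
next
  case False
  have "\<sigma> x * \<sigma> (inverse x) = 1" using sigma_mult[of x "inverse x"] False s1 by simp
  then show ?thesis by (metis inverse_unique)
qed

lemma snz: "x \<noteq> 0 \<Longrightarrow> \<sigma> x \<noteq> 0"
  using sigma_mult[of x "inverse x"] s1 s0 by auto

lemma sdiv: "\<sigma> (x / y) = \<sigma> x / \<sigma> y"
  by (simp add: divide_inverse sigma_mult sinv)

lemma spow: "\<sigma> (x ^ n) = \<sigma> x ^ n"
  by (induction n) (simp_all add: s1 sigma_mult)

lemma sminus: "\<sigma> (- x) = - \<sigma> x"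
  using sigma_add[of x "-x"] s0 by (simp add: eq_neg_iff_add_eq_0 add.commute)

lemma sprod: "\<sigma> (prod f A) = prod (\<lambda>i. \<sigma> (f i)) A"
  by (induction A rule: infinite_finite_induct) (simp_all add: s1 sigma_mult)

lemma ssum: "\<sigma> (sum f A) = sum (\<lambda>i. \<sigma> (f i)) A"
  by (induction A rule: infinite_finite_induct) (simp_all add: s0 sigma_add)

lemma nmult: "(\<sigma>^^n) (x * y) = (\<sigma>^^n) x * (\<sigma>^^n) y"
  by (induction n) (simp_all add: sigma_mult)
lemma nadd: "(\<sigma>^^n) (x + y) = (\<sigma>^^n) x + (\<sigma>^^n) y"
  by (induction n) (simp_all add: sigma_add)
lemma nminus: "(\<sigma>^^n) (- x) = - (\<sigma>^^n) x"
  by (induction n) (simp_all add: sminus)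
lemma ninv: "(\<sigma>^^n) (inverse x) = inverse ((\<sigma>^^n) x)"
  by (induction n) (simp_all add: sinv)
lemma n0: "(\<sigma>^^n) 0 = 0"
  by (induction n) (simp_all add: s0)
lemma nF: "c \<in> F \<Longrightarrow> (\<sigma>^^n) c = c"
  by (induction n) (simp_all add: sigma_F)
lemma npow: "(\<sigma>^^n) (x ^ m) = (\<sigma>^^n) x ^ m"
  by (induction n) (simp_all add: spow)
lemma nnz: "x \<noteq> 0 \<Longrightarrow> (\<sigma>^^n) x \<noteq> 0"
  by (induction n) (simp_all add: snz)
lemma ntheta: "(\<sigma>^^n) \<theta> = \<xi>^n * \<theta>"
proof (induction n)
  case (Suc n) then show ?case
    by (simp add: sigma_mult sigma_theta spow sigma_F xi_F)
qed simp

lemma theta_nz: "\<theta> \<noteq> 0" using theta a_ne0 p_pos by auto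

lemma sigma_p: "(\<sigma>^^p) x = x"
proof -
  let ?L = "{y. (\<sigma>^^p) y = y}"
  have "is_subfield ?L"
    unfolding is_subfield_def
    using nF[OF one_F] n0 by (auto simp: nadd nmult nminus ninv nF F_sub)
  moreover have "F \<subseteq> ?L" using nF by auto
  moreover have "\<theta> \<in> ?L" by (simp add: ntheta xi_root)
  ultimately have "gen_field F \<theta> \<subseteq> ?L" unfolding gen_field_def by blast
  then show ?thesis using K_gen by auto
qed

lemma xi_nz: "\<xi> \<noteq> 0" using xi_root p_pos by (metis power_0_left less_not_refl2 zero_neq_one)

lemma xi_pow_ne1: assumes "0 < k" "k < p" shows "\<xi> ^ k \<noteq> 1"
proof
  assume h: "\<xi> ^ k = 1"
  have g: "gcd k p = 1"
    by (metis assms coprime_iff_gcd_eq_1 gcd.commute nat_dvd_not_less prime_imp_coprime p_prime)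
  obtain x y where xy: "k * x = p * y + gcd k p" using bezout_nat[of k p] assms by auto
  have "\<xi> ^ (k * x) = 1" using h by (simp add: power_mult)
  moreover have "\<xi> ^ (k * x) = \<xi>" using xy g xi_root by (simp add: power_add power_mult)
  ultimately show False using xi_ne1 by simp
qed

lemma xi_inj: assumes "i < p" "j < p" "\<xi> ^ i = \<xi> ^ j" shows "i = j"
proof (rule ccontr)
  assume "i \<noteq> j"
  then consider "i < j" | "j < i" by linarith
  then show False
  proof cases
    case 1
    have "\<xi> ^ j = \<xi> ^ i * \<xi> ^ (j - i)" using 1 by (simp add: power_add[symmetric])
    then have "\<xi> ^ (j - i) = 1" using assms(3) xi_nz by simp
    then show False using xi_pow_ne1[of "j - i"] 1 assms by simp
  next
    case 2
    have "\<xi> ^ i = \<xi> ^ j * \<xi> ^ (i - j)" using 2 by (simp add: power_add[symmetric])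
    then have "\<xi> ^ (i - j) = 1" using assms(3) xi_nz by simp
    then show False using xi_pow_ne1[of "i - j"] 2 assms by simp
  qed
qed

lemma roots_xi: assumes "z ^ p = 1" shows "\<exists>j<p. z = \<xi> ^ j"
proof -
  let ?R = "{z::'k. z^p = 1}"
  have fin: "finite ?R" and c: "card ?R \<le> p" using roots_card[OF p_pos] by auto
  have sub: "(\<lambda>j. \<xi> ^ j) ` {..<p} \<subseteq> ?R"
    using xi_root by (auto simp: power_mult[symmetric] mult.commute[of _ p] power_mult)
  have "inj_on (\<lambda>j. \<xi> ^ j) {..<p}" using xi_inj by (auto simp: inj_on_def)
  then have "card ((\<lambda>j. \<xi> ^ j) ` {..<p}) = p" by (simp add: card_image)
  then have "(\<lambda>j. \<xi> ^ j) ` {..<p} = ?R" using card_subset_eq[OF fin sub] c card_mono[OF fin sub] by simp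
  then show ?thesis using assms by auto
qed

lemma xipow_F: "\<xi> ^ j \<in> F"
proof (induction j)
  case 0 then show ?case using one_F by simp
next
  case (Suc j) then show ?case using F_sub xi_F unfolding is_subfield_def by simp
qed

lemma root_fixed: "z ^ p = 1 \<Longrightarrow> \<sigma> z = z"
  using roots_xi sigma_F xipow_F by blast

lemma sum_xi: assumes "0 < k" "k < p" shows "(\<Sum>i<p. \<xi> ^ (i * k)) = 0"
proof -
  have "(\<Sum>i<p. \<xi> ^ (i * k)) = (\<Sum>i<p. (\<xi> ^ k) ^ i)"
    by (simp add: power_mult[symmetric] mult.commute)
  also have "\<dots> = ((\<xi> ^ k) ^ p - 1) / (\<xi> ^ k - 1)"
    using xi_pow_ne1[OF assms] by (simp add: geometric_sum)
  also have "(\<xi> ^ k) ^ p = 1" using xi_root by (metis power_mult mult.commute power_one)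
  finally show ?thesis by simp
qed

definition N :: "'k \<Rightarrow> 'k" where "N x = (\<Prod>i<p. (\<sigma>^^i) x)"
definition Q :: "'k \<Rightarrow> 'k" where "Q x = (\<Prod>i<p. ((\<sigma>^^i) x) ^ i)"
definition T :: "'k \<Rightarrow> 'k" where "T x = \<sigma> x / x"

lemma N_mult: "N (x * y) = N x * N y" by (simp add: N_def nmult prod.distrib)
lemma N_inv: "N (inverse x) = inverse (N x)" by (simp add: N_def ninv prod_inversef[symmetric, unfolded comp_def])
lemma N_pow: "N (x ^ m) = N x ^ m" by (simp add: N_def npow prod_power_distrib)
lemma N_div: "N (x / y) = N x / N y" by (simp add: divide_inverse N_mult N_inv)
lemma N_nz: "x \<noteq> 0 \<Longrightarrow> N x \<noteq> 0" by (simp add: N_def nnz)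
lemma Q_mult: "Q (x * y) = Q x * Q y" by (simp add: Q_def nmult prod.distrib power_mult_distrib)
lemma Q_inv: "Q (inverse x) = inverse (Q x)" by (simp add: Q_def ninv prod_inversef[symmetric, unfolded comp_def] power_inverse)
lemma Q_div: "Q (x / y) = Q x / Q y" by (simp add: divide_inverse Q_mult Q_inv)
lemma Q_pow: "Q (x ^ m) = Q x ^ m"
  by (simp add: Q_def npow prod_power_distrib power_mult[symmetric] mult.commute)
lemma Q_nz: "x \<noteq> 0 \<Longrightarrow> Q x \<noteq> 0" by (simp add: Q_def nnz)
lemma Q_sigma: "Q (\<sigma> x) = \<sigma> (Q x)"
  by (simp add: Q_def sprod spow funpow_swap1)
lemma N_sigma_comm: "N (\<sigma> x) = \<sigma> (N x)"
  by (simp add: N_def sprod funpow_swap1)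
lemma Q_fixed: "\<sigma> x = x \<Longrightarrow> Q x = x ^ (\<Sum>i<p. i)"
proof -
  assume h: "\<sigma> x = x"
  have "\<And>i. (\<sigma>^^i) x = x" by (induct_tac i) (simp_all add: h)
  then show ?thesis by (simp add: Q_def power_sum)
qed

lemma shift_prod:
  fixes u :: "nat \<Rightarrow> 'k"
  shows "(\<Prod>i<p. u (Suc i)) * u 0 = (\<Prod>i<p. u i) * u p"
  using prod.lessThan_Suc_shift[of u p] prod.lessThan_Suc[of u p] by (simp add: mult.commute)

lemma N_fixed: "\<sigma> (N x) = N x"
proof (cases "x = 0")
  case True then show ?thesis using p_pos by (simp add: N_def n0 s0 power_0_left)
next
  case False
  have "\<sigma> (N x) * x = N x * x"
    using shift_prod[of "\<lambda>i. (\<sigma>^^i) x"] sigma_p by (simp add: N_def sprod)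
  then show ?thesis using False by simp
qed

lemma key_Q: "\<sigma> (Q x) * N x = Q x * x ^ p"
proof -
  have "\<sigma> (Q x) * N x = \<sigma> (Q x) * \<sigma> (N x)" by (simp add: N_fixed)
  also have "\<dots> = (\<Prod>i<p. ((\<sigma>^^(Suc i)) x) ^ (Suc i))"
    by (simp add: Q_def N_def sprod spow prod.distrib[symmetric] mult.commute)
  also have "\<dots> = (\<Prod>i<p. ((\<sigma>^^(Suc i)) x) ^ (Suc i)) * ((\<sigma>^^0) x) ^ 0" by simp
  also have "\<dots> = Q x * ((\<sigma>^^p) x) ^ p"
    using shift_prod[of "\<lambda>i. ((\<sigma>^^i) x) ^ i"] by (simp add: Q_def)
  finally show ?thesis using sigma_p by simp
qed

lemma T_mult: "T (x * y) = T x * T y" by (simp add: T_def sigma_mult)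
lemma T_inv: "T (inverse x) = inverse (T x)" by (simp add: T_def sinv divide_inverse mult.commute)
lemma T_div: "T (x / y) = T x / T y" by (simp add: T_def sdiv)
lemma T_pow: "T (x ^ m) = T x ^ m" by (simp add: T_def spow power_divide)
lemma T_nz: "x \<noteq> 0 \<Longrightarrow> T x \<noteq> 0" by (simp add: T_def snz)
lemma T_fixed: "\<sigma> x = x \<Longrightarrow> x \<noteq> 0 \<Longrightarrow> T x = 1" by (simp add: T_def)
lemma sigma_T: "x \<noteq> 0 \<Longrightarrow> \<sigma> x = x * T x" by (simp add: T_def)
lemma Q_T: "Q (T x) = T (Q x)" by (simp add: T_def Q_div Q_sigma)
lemma N_T: "x \<noteq> 0 \<Longrightarrow> N (T x) = 1"
  by (simp add: T_def N_div N_sigma_comm N_fixed N_nz)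
lemma T_Q: "x \<noteq> 0 \<Longrightarrow> T (Q x) = x ^ p / N x"
  using key_Q[of x] Q_nz[of x] N_nz[of x] by (simp add: T_def field_simps)
lemma T_N: "x \<noteq> 0 \<Longrightarrow> T (N x) = 1" using N_fixed N_nz T_fixed by blast

lemma hilbert90:
  assumes f0: "f \<noteq> 0" and Nf: "N f = 1"
  shows "\<exists>g. g \<noteq> 0 \<and> f = T g"
proof -
  define P where "P k = (\<Prod>i<k. (\<sigma>^^i) f)" for k
  define G where "G z = (\<Sum>k<p. P k * (\<sigma>^^k) z)" for z
  have PS: "P (Suc k) = f * \<sigma> (P k)" for k
    unfolding P_def prod.lessThan_Suc_shift by (simp add: sprod del: prod.lessThan_Suc)
  have fG: "f * \<sigma> (G z) = G z" for z
  proof -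
    let ?w = "\<lambda>k. P k * (\<sigma>^^k) z"
    have "f * \<sigma> (G z) = (\<Sum>k<p. ?w (Suc k))"
      by (simp add: G_def ssum sum_distrib_left sigma_mult PS mult.assoc)
    also have "\<dots> = (\<Sum>k<p. ?w (Suc k)) + ?w 0 - ?w 0" by simp
    also have "(\<Sum>k<p. ?w (Suc k)) + ?w 0 = (\<Sum>k<p. ?w k) + ?w p"
      using sum.lessThan_Suc_shift[of ?w p] sum.lessThan_Suc[of ?w p] by (simp add: add.commute)
    also have "?w p = ?w 0" using Nf sigma_p by (simp add: P_def N_def)
    finally show ?thesis by (simp add: G_def)
  qed
  have "\<exists>i<p. G (\<theta> ^ i) \<noteq> 0"
  proof (rule ccontr)
    assume "\<not> ?thesis"
    then have z: "G (\<theta> ^ i) = 0" if "i < p" for i using that by auto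
    have Gt: "G (\<theta> ^ i) = \<theta> ^ i * (\<Sum>k<p. P k * \<xi> ^ (i * k))" for i
      by (simp add: G_def npow ntheta sum_distrib_left power_mult_distrib power_mult[symmetric]
          mult.commute mult.left_commute)
    have z2: "(\<Sum>k<p. P k * \<xi> ^ (i * k)) = 0" if "i < p" for i
      using z[OF that] Gt[of i] theta_nz by simp
    have "0 = (\<Sum>i<p. \<Sum>k<p. P k * \<xi> ^ (i * k))" using z2 by simp
    also have "\<dots> = (\<Sum>k<p. P k * (\<Sum>i<p. \<xi> ^ (i * k)))"
      by (subst sum.swap) (simp add: sum_distrib_left)
    also have "\<dots> = (\<Sum>k<p. if k = 0 then of_nat p else 0)"
      by (rule sum.cong) (auto simp: sum_xi P_def)
    also have "\<dots> = of_nat p" using p_pos by simp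
    finally show False using char by simp
  qed
  then obtain i where Gnz: "G (\<theta> ^ i) \<noteq> 0" by blast
  define g where "g = inverse (G (\<theta> ^ i))"
  have "\<sigma> (G (\<theta> ^ i)) \<noteq> 0" using Gnz snz by blast
  then have "f = G (\<theta> ^ i) / \<sigma> (G (\<theta> ^ i))" using fG[of "\<theta> ^ i"] by (simp add: field_simps)
  then have "f = T g" by (simp add: g_def T_def sinv divide_inverse mult.commute)
  moreover have "g \<noteq> 0" using Gnz g_def by simp
  ultimately show ?thesis by blast
qed

lemma sum_lt: "2 * (\<Sum>i<n. i) = n * (n - 1::nat)"
proof (induction n)
  case (Suc n)
  then show ?case by (cases n) (simp_all add: algebra_simps)
qed simp

lemma p_odd: "odd p"
  using p_prime p_gt2 prime_odd_nat by auto

lemma S_eq: "(\<Sum>i<p. i) = p * ((p - 1) div 2)"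
proof -
  have "even (p - 1)" using p_odd p_pos by simp
  then show ?thesis using sum_lt[of p] by (metis dvd_mult_div_cancel mult.left_commute nonzero_mult_div_cancel_left zero_neq_numeral)
qed

lemma normlemma:
  assumes b0: "\<beta> \<noteq> 0" and f0: "f \<noteq> 0" and Tc: "T (T \<beta>) = f ^ p"
  shows "\<exists>w g. w \<noteq> 0 \<and> g \<noteq> 0 \<and> w ^ p = N \<beta> \<and> T \<beta> = T w * (g ^ p / N g)"
proof -
  define c where "c = T \<beta>"
  have c0: "c \<noteq> 0" using b0 T_nz c_def by simp
  have Nc: "N c = 1" using N_T[OF b0] c_def by simp
  have "Q f ^ p = c ^ p"
    using Q_T[of c] T_Q[OF c0] Tc Nc by (simp add: c_def Q_pow)
  define \<zeta> where "\<zeta> = Q f / c"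
  have z1: "\<zeta> ^ p = 1" using \<open>Q f ^ p = c ^ p\<close> c0 by (simp add: \<zeta>_def power_divide)
  then have zs: "\<sigma> \<zeta> = \<zeta>" by (rule root_fixed)
  have z0: "\<zeta> \<noteq> 0" using z1 p_pos by (metis power_0_left less_not_refl2 zero_neq_one)
  have Qf: "Q f = \<zeta> * c" using c0 by (simp add: \<zeta>_def)
  have sc: "\<sigma> c = c * f ^ p" using sigma_T[OF c0] Tc c_def by simp
  have "\<sigma> (Q f) * N f = Q f * f ^ p" by (rule key_Q)
  then have "\<zeta> * (c * f ^ p) * N f = \<zeta> * c * f ^ p" using Qf sc zs by (simp add: sigma_mult)
  then have Nf: "N f = 1" using z0 c0 f0 by simp
  obtain g where g0: "g \<noteq> 0" and fg: "f = T g" using hilbert90[OF f0 Nf] by blast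
  define x where "x = c / g ^ p"
  have x0: "x \<noteq> 0" using c0 g0 by (simp add: x_def)
  have sx: "\<sigma> x = x"
    using sc sigma_T[OF g0] fg g0 f0 by (simp add: x_def sdiv spow power_mult_distrib)
  define m where "m = (p - 1) div 2"
  define h where "h = x ^ m * Q g"
  have h0: "h \<noteq> 0" using x0 Q_nz[OF g0] by (simp add: h_def)
  have "c = x * g ^ p" using g0 by (simp add: x_def)
  then have "Q c = Q x * Q g ^ p" by (simp add: Q_mult Q_pow)
  also have "\<dots> = x ^ (\<Sum>i<p. i) * Q g ^ p" using Q_fixed[OF sx] by simp
  also have "\<dots> = h ^ p" by (simp add: S_eq h_def m_def power_mult_distrib power_mult[symmetric] mult.commute)
  finally have Qc: "Q c = h ^ p" .
  have "Q c = \<beta> ^ p / N \<beta>" using Q_T[of \<beta>] T_Q[OF b0] c_def by simp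
  define w where "w = \<beta> / h"
  have w0: "w \<noteq> 0" using b0 h0 by (simp add: w_def)
  have wp: "w ^ p = N \<beta>"
    using Qc \<open>Q c = \<beta> ^ p / N \<beta>\<close> h0 b0 N_nz[OF b0] by (simp add: w_def power_divide field_simps)
  have "T \<beta> = T w * T h" using h0 by (simp add: w_def T_mult[symmetric])
  also have "T h = g ^ p / N g"
    using T_fixed[OF sx x0] T_Q[OF g0] by (simp add: h_def T_mult T_pow)
  finally show ?thesis using w0 g0 wp by blast
qed

definition pwc :: "'k \<Rightarrow> bool" where "pwc y \<longleftrightarrow> (\<exists>e. e \<noteq> 0 \<and> y = e ^ p)"

lemma pwc_T: "pwc y \<Longrightarrow> pwc (T y)"
  unfolding pwc_def using T_pow T_nz by metis

lemma pwc_mult: "pwc x \<Longrightarrow> pwc y \<Longrightarrow> pwc (x * y)"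
  unfolding pwc_def by (metis mult_eq_0_iff power_mult_distrib)

lemma Tn_mult: "(T^^m) (x * y) = (T^^m) x * (T^^m) y"
  by (induction m) (simp_all add: T_mult)
lemma Tn_pow: "(T^^m) (x ^ n) = (T^^m) x ^ n"
  by (induction m) (simp_all add: T_pow)
lemma Tn_nz: "x \<noteq> 0 \<Longrightarrow> (T^^m) x \<noteq> 0"
  by (induction m) (simp_all add: T_nz)

lemma pwc_Tn: "pwc y \<Longrightarrow> pwc ((T^^m) y)"
  by (induction m) (simp_all add: pwc_T)

lemma fixed_Tn: "pwc (T y) \<Longrightarrow> m \<ge> 1 \<Longrightarrow> pwc ((T^^m) y)"
proof (induction m)
  case (Suc m)
  then show ?case using pwc_Tn[of "T y" m] by (simp add: funpow_swap1)
qed simp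

context
  fixes \<beta> :: 'k and l :: nat
  assumes b0: "\<beta> \<noteq> 0" and l1: "l \<ge> 1"
    and TL: "pwc ((T^^l) \<beta>)" and notL: "\<not> pwc ((T^^(l - 1)) \<beta>)"
begin

definition \<gamma> where "\<gamma> i = (T^^i) \<beta>"
definition V where "V k = pspan p (\<gamma> ` {k..<l})"

lemma g_nz: "\<gamma> i \<noteq> 0" using Tn_nz b0 by (simp add: \<gamma>_def)

lemma g_Suc: "\<gamma> (Suc i) = T (\<gamma> i)" by (simp add: \<gamma>_def)

lemma g_high: "m \<ge> l \<Longrightarrow> pwc (\<gamma> m)"
proof (induction m rule: dec_induct)
  case base then show ?case using TL by (simp add: \<gamma>_def)
next
  case (step m) then show ?case using pwc_T by (simp add: g_Suc)
qed

lemma pwc_in: "pwc y \<Longrightarrow> y \<in> pspan p S"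
  unfolding pwc_def by (auto intro: pspan.pw)

lemma g_in_V: assumes "k \<le> i" shows "\<gamma> i \<in> V k"
proof (cases "i < l")
  case True show ?thesis unfolding V_def by (rule pspan.gen) (use True assms in \<open>auto simp: g_nz\<close>)
next
  case False show ?thesis unfolding V_def by (rule pwc_in, rule g_high) (use False in auto)
qed

lemma V_T: "y \<in> V k \<Longrightarrow> T y \<in> V (Suc k)"
  unfolding V_def
  by (rule pspan_map[of T]) (auto simp: T_mult T_pow T_nz g_Suc[symmetric] intro!: g_in_V[unfolded V_def])

lemma V_Tn: "y \<in> V k \<Longrightarrow> (T^^m) y \<in> V (k + m)"
  by (induction m) (simp_all add: V_T)

lemma V_high: "k \<ge> l \<Longrightarrow> y \<in> V k \<Longrightarrow> pwc y"
  unfolding V_def pwc_def using pspan_empty by auto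

lemma V_decomp0: assumes kl: "k < l"
  shows "y \<in> pspan p (\<gamma> ` {k..<l}) \<Longrightarrow> \<exists>e z. z \<in> pspan p (\<gamma> ` {Suc k..<l}) \<and> y = \<gamma> k ^ e * z"
proof (induction rule: pspan.induct)
  case (gen s)
  then obtain i where i: "k \<le> i" "i < l" "s = \<gamma> i" by auto
  show ?case
  proof (cases "i = k")
    case True then show ?thesis using i pspan_one
      by (intro exI[of _ 1] exI[of _ 1]) auto
  next
    case False then show ?thesis using i g_in_V[of "Suc k" i] unfolding V_def
      by (intro exI[of _ 0] exI[of _ s]) auto
  qed
next
  case (pw e) then show ?case by (intro exI[of _ 0] exI[of _ "e ^ p"]) (auto intro: pspan.pw)
next
  case (mult x y)
  then obtain e1 z1 e2 z2 where "z1 \<in> pspan p (\<gamma> ` {Suc k..<l})" "x = \<gamma> k ^ e1 * z1"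
    "z2 \<in> pspan p (\<gamma> ` {Suc k..<l})" "y = \<gamma> k ^ e2 * z2" by blast
  then show ?case by (intro exI[of _ "e1 + e2"] exI[of _ "z1 * z2"])
      (auto intro: pspan.mult simp: power_add algebra_simps)
qed

lemma V_decomp: "k < l \<Longrightarrow> y \<in> V k \<Longrightarrow> \<exists>e z. z \<in> V (Suc k) \<and> y = \<gamma> k ^ e * z"
  unfolding V_def using V_decomp0 by blast

lemma descent:
  assumes k: "Suc k < l" and y: "y \<in> V k" and fy: "pwc (T y)"
  shows "y \<in> V (Suc k)"
proof -
  obtain e z where z: "z \<in> V (Suc k)" and yz: "y = \<gamma> k ^ e * z" using V_decomp[OF _ y] k by auto
  define m where "m = l - 1 - k"
  have m1: "m \<ge> 1" using k by (simp add: m_def)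
  have "pwc ((T^^m) y)" by (rule fixed_Tn[OF fy m1])
  then obtain u where u0: "u \<noteq> 0" and u: "(T^^m) y = u ^ p" unfolding pwc_def by blast
  have "(T^^m) z \<in> V (Suc k + m)" by (rule V_Tn[OF z])
  moreover have "Suc k + m \<ge> l" using k by (simp add: m_def)
  ultimately have "pwc ((T^^m) z)" using V_high by blast
  then obtain w where w0: "w \<noteq> 0" and w: "(T^^m) z = w ^ p" unfolding pwc_def by blast
  have "(T^^m) ((T^^k) \<beta>) = (T^^(m + k)) \<beta>" by (simp add: funpow_add)
  moreover have "m + k = l - 1" using k by (simp add: m_def)
  ultimately have gm: "(T^^m) (\<gamma> k) = \<gamma> (l - 1)" by (simp add: \<gamma>_def)
  have c0: "\<gamma> (l - 1) \<noteq> 0" by (rule g_nz)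
  have ce: "\<gamma> (l - 1) ^ e = (u / w) ^ p"
    using u w yz gm w0 by (simp add: Tn_mult Tn_pow power_divide eq_divide_eq)
  have "p dvd e"
  proof (rule ccontr)
    assume nd: "\<not> p dvd e"
    then have e0: "e \<noteq> 0" by (metis dvd_0_right)
    have "gcd e p = 1"
      using nd p_prime by (metis coprime_iff_gcd_eq_1 gcd.commute prime_imp_coprime)
    then obtain x y' where xy: "e * x = p * y' + 1" using bezout_nat[OF e0, of p] by auto
    have "\<gamma> (l - 1) ^ (e * x) = ((u / w) ^ x) ^ p"
      using ce by (metis power_mult mult.commute)
    moreover have "\<gamma> (l - 1) ^ (e * x) = (\<gamma> (l - 1) ^ y') ^ p * \<gamma> (l - 1)"
      using xy by (metis power_add power_one_right power_mult mult.commute)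
    ultimately have "\<gamma> (l - 1) = ((u / w) ^ x / \<gamma> (l - 1) ^ y') ^ p"
      using c0 w0 by (simp add: power_divide field_simps)
    moreover have "(u / w) ^ x / \<gamma> (l - 1) ^ y' \<noteq> 0" using u0 w0 c0 by simp
    ultimately have "pwc (\<gamma> (l - 1))" unfolding pwc_def by blast
    then show False using notL by (simp add: \<gamma>_def)
  qed
  then obtain q where "e = p * q" by blast
  then have "y = z * (\<gamma> k ^ q) ^ p" using yz by (metis power_mult mult.commute)
  then show ?thesis using pspan_class[of z p _ "\<gamma> k ^ q"] z g_nz unfolding V_def by simp
qed

lemma descent_all: "k \<le> l - 1 \<Longrightarrow> y \<in> V k \<Longrightarrow> pwc (T y) \<Longrightarrow> y \<in> V (l - 1)"
proof (induction "l - 1 - k" arbitrary: k)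
  case 0 then have "k = l - 1" by simp
  then show ?case using 0 by simp
next
  case (Suc n)
  then have "Suc k < l" by simp
  then have "y \<in> V (Suc k)" using descent Suc by blast
  moreover have "n = l - 1 - Suc k" "Suc k \<le> l - 1" using Suc.hyps(2) by auto
  ultimately show ?case using Suc.hyps(1)[of "Suc k"] Suc.prems by blast
qed

lemma V_last: "V (l - 1) = pspan p {\<gamma> (l - 1)}"
proof -
  have "{l - 1..<l} = {l - 1}" using l1 by auto
  then show ?thesis by (simp add: V_def)
qed

lemma V0_sigma: "y \<in> V 0 \<Longrightarrow> \<sigma> y \<in> V 0"
  unfolding V_def
proof (rule pspan_map[of \<sigma>])
  fix s assume "s \<in> \<gamma> ` {0..<l}" "s \<noteq> 0"
  then obtain i where i: "i < l" "s = \<gamma> i" by auto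
  have "\<sigma> s = \<gamma> i * \<gamma> (Suc i)" using i sigma_T[OF g_nz[of i]] by (simp add: g_Suc)
  then show "\<sigma> s \<in> pspan p (\<gamma> ` {0..<l})"
    using g_in_V[of 0 i] g_in_V[of 0 "Suc i"] unfolding V_def by (auto intro: pspan.mult)
qed (auto simp: sigma_mult spow snz)

lemma cyc_V0: "cycmod p \<sigma> \<beta> \<subseteq> V 0"
proof
  fix y assume y: "y \<in> cycmod p \<sigma> \<beta>"
  have h: "(\<sigma>^^i) \<beta> \<in> V 0" for i
  proof (induction i)
    case 0 then show ?case using g_in_V[of 0 0] by (simp add: \<gamma>_def)
  next
    case (Suc i) then show ?case using V0_sigma by simp
  qed
  show "y \<in> V 0" unfolding V_def
    by (rule pspan_mono[OF _ y[unfolded cycmod_def]]) (use h in \<open>auto simp: V_def\<close>)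
qed

lemma cyc_sigma: "y \<in> cycmod p \<sigma> \<beta> \<Longrightarrow> \<sigma> y \<in> cycmod p \<sigma> \<beta>"
  unfolding cycmod_def
proof (rule pspan_map[of \<sigma>])
  fix s assume "s \<in> range (\<lambda>i. (\<sigma>^^i) \<beta>)" "s \<noteq> 0"
  then obtain i where "s = (\<sigma>^^i) \<beta>" by auto
  then have "\<sigma> s = (\<sigma>^^(Suc i)) \<beta>" by simp
  then show "\<sigma> s \<in> pspan p (range (\<lambda>i. (\<sigma>^^i) \<beta>))"
    by (auto intro!: pspan.gen simp: nnz b0 simp del: funpow.simps)
qed (auto simp: sigma_mult spow snz)

lemma V0_cyc: "V 0 \<subseteq> cycmod p \<sigma> \<beta>"
proof
  have g: "\<gamma> i \<in> cycmod p \<sigma> \<beta>" for i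
  proof (induction i)
    case 0
    have "\<beta> = (\<sigma>^^0) \<beta>" by simp
    then have "\<beta> \<in> range (\<lambda>i. (\<sigma>^^i) \<beta>)" by blast
    then show ?case using b0 unfolding cycmod_def \<gamma>_def by (auto intro!: pspan.gen)
  next
    case (Suc i)
    have "\<gamma> (Suc i) = \<sigma> (\<gamma> i) * inverse (\<gamma> i)" by (simp add: g_Suc T_def divide_inverse)
    have a: "\<sigma> (\<gamma> i) \<in> pspan p (range (\<lambda>i. (\<sigma>^^i) \<beta>))" using cyc_sigma[OF Suc] unfolding cycmod_def .
    have b: "inverse (\<gamma> i) \<in> pspan p (range (\<lambda>i. (\<sigma>^^i) \<beta>))"
      using pspan_inv[OF p_pos] Suc unfolding cycmod_def by blast
    show ?case using pspan.mult[OF a b] \<open>\<gamma> (Suc i) = _\<close> unfolding cycmod_def by simp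
  qed
  fix y assume "y \<in> V 0"
  then show "y \<in> cycmod p \<sigma> \<beta>" unfolding V_def cycmod_def
    by (rule pspan_mono[rotated]) (use g in \<open>auto simp: cycmod_def\<close>)
qed

lemma fixed_iff: "y \<noteq> 0 \<Longrightarrow> same_class p (\<sigma> y) y \<longleftrightarrow> pwc (T y)"
  unfolding same_class_def pwc_def T_def by (auto simp: field_simps)

lemma module: "pspan p {\<gamma> (l - 1)} = cycmod_fix p \<sigma> \<beta>"
proof
  show "pspan p {\<gamma> (l - 1)} \<subseteq> cycmod_fix p \<sigma> \<beta>"
  proof
    fix y assume y: "y \<in> pspan p {\<gamma> (l - 1)}"
    have "y \<in> V 0" unfolding V_def
      by (rule pspan_mono[OF _ y]) (use g_in_V[of 0 "l - 1"] in \<open>auto simp: V_def\<close>)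
    then have "y \<in> cycmod p \<sigma> \<beta>" using V0_cyc by blast
    moreover have "pwc (T y)" using y
    proof (induction rule: pspan.induct)
      case (gen s) then show ?case using g_high[of l] l1 by (simp add: g_Suc[symmetric])
    next
      case (pw e) then show ?case unfolding pwc_def using T_pow T_nz by metis
    next
      case (mult x y) then show ?case by (simp add: T_mult pwc_mult)
    qed
    ultimately show "y \<in> cycmod_fix p \<sigma> \<beta>" using fixed_iff pspan_nz[OF y]
      by (simp add: cycmod_fix_def)
  qed
next
  show "cycmod_fix p \<sigma> \<beta> \<subseteq> pspan p {\<gamma> (l - 1)}"
  proof
    fix y assume y: "y \<in> cycmod_fix p \<sigma> \<beta>"
    then have yc: "y \<in> cycmod p \<sigma> \<beta>" and "same_class p (\<sigma> y) y" by (auto simp: cycmod_fix_def)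
    then have "pwc (T y)" using fixed_iff pspan_nz[of y] unfolding cycmod_def by blast
    then show "y \<in> pspan p {\<gamma> (l - 1)}" using descent_all[of 0 y] cyc_V0 yc V_last by auto
  qed
qed


lemma module': "pspan p {(T^^(l - 1)) \<beta>} = cycmod_fix p \<sigma> \<beta>"
  using module by (simp add: \<gamma>_def)

end

lemma module_clean:
  assumes "\<beta> \<noteq> 0" "l \<ge> 1" "pwc ((T^^l) \<beta>)" "\<not> pwc ((T^^(l - 1)) \<beta>)"
  shows "pspan p {(T^^(l - 1)) \<beta>} = cycmod_fix p \<sigma> \<beta>"
  using module'[OF assms] .

lemma final:
  assumes "\<beta> \<noteq> 0" "l \<ge> 1" "pwc ((T^^l) \<beta>)" "\<not> pwc ((T^^(l - 1)) \<beta>)"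
    and g0: "g \<noteq> 0" and c: "(T^^(l - 1)) \<beta> = g ^ p / N g"
  shows "pspan p {N (inverse g)} = cycmod_fix p \<sigma> \<beta>"
proof -
  have "inverse (N g) = (g ^ p / N g) * (inverse g) ^ p"
    using g0 N_nz[OF g0] by (simp add: field_simps)
  then have "N (inverse g) = (T^^(l - 1)) \<beta> * (inverse g) ^ p"
    using c by (simp add: N_inv)
  then have "pspan p {N (inverse g)} = pspan p {(T^^(l - 1)) \<beta>}"
    by (rule pspan_single_class) (use g0 Tn_nz assms(1) p_pos in auto)
  then show ?thesis using module_clean[OF assms(1-4)] by simp
qed

lemma T_theta: "T \<theta> = \<xi>" using theta_nz by (simp add: T_def sigma_theta)

lemma partA:
  assumes g0: "\<eta> \<noteq> 0" and l3: "3 \<le> l" and TL: "pwc ((T^^l) \<eta>)" and nL: "\<not> pwc ((T^^(l - 1)) \<eta>)"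
  shows "\<exists>\<alpha>. \<alpha> \<noteq> 0 \<and> pspan p {N \<alpha>} = cycmod_fix p \<sigma> \<eta>"
proof -
  define d where "d = (T^^(l - 3)) \<eta>"
  define b where "b = T d"
  have d0: "d \<noteq> 0" using Tn_nz g0 by (simp add: d_def)
  have b0: "b \<noteq> 0" using T_nz d0 by (simp add: b_def)
  have l1: "l - 1 = Suc (Suc (l - 3))" and l0: "l = Suc (Suc (Suc (l - 3)))" using l3 by auto
  have cb: "(T^^(l - 1)) \<eta> = T b" by (subst l1) (simp add: b_def d_def)
  have "T (T b) = (T^^l) \<eta>" by (subst l0) (simp add: b_def d_def)
  then obtain f where f0: "f \<noteq> 0" and Tf: "T (T b) = f ^ p" using TL unfolding pwc_def by auto
  obtain w g where w0: "w \<noteq> 0" and gg0: "g \<noteq> 0" and wp: "w ^ p = N b" and Tb: "T b = T w * (g ^ p / N g)"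
    using normlemma[OF b0 f0 Tf] by blast
  have "w ^ p = 1" using wp N_T[OF d0] by (simp add: b_def)
  then have "T w = 1" using root_fixed T_fixed w0 by blast
  then have "(T^^(l - 1)) \<eta> = g ^ p / N g" using cb Tb by simp
  then have "pspan p {N (inverse g)} = cycmod_fix p \<sigma> \<eta>"
    using final[OF g0 _ TL nL gg0] l3 by simp
  then show ?thesis using gg0 by (intro exI[of _ "inverse g"]) simp
qed

lemma partB:
  assumes g0: "\<eta> \<noteq> 0" and TL: "pwc (T (T \<eta>))" and nL: "\<not> pwc (T \<eta>)"
    and hyp: "\<not> (\<exists>r::int. \<exists>\<eta>1. \<eta>1 \<noteq> 0 \<and> pwc (T \<eta>1) \<and> \<eta> = \<theta> powi r * \<eta>1)"
  shows "\<exists>t::int. \<exists>\<alpha>. \<alpha> \<noteq> 0 \<and> pspan p {N \<alpha>} = cycmod_fix p \<sigma> (\<theta> powi t * \<eta>)"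
proof -
  obtain f where f0: "f \<noteq> 0" and Tf: "T (T \<eta>) = f ^ p" using TL unfolding pwc_def by auto
  obtain w g where w0: "w \<noteq> 0" and gg0: "g \<noteq> 0" and wp: "w ^ p = N \<eta>" and Tg: "T \<eta> = T w * (g ^ p / N g)"
    using normlemma[OF g0 f0 Tf] by blast
  have "T w ^ p = 1" using wp T_N[OF g0] by (simp add: T_pow[symmetric])
  then obtain j where j: "T w = \<xi> ^ j" using roots_xi by blast
  define t :: int where "t = - int j"
  define \<eta>' where "\<eta>' = \<theta> powi t * \<eta>"
  have tp: "\<theta> powi t = inverse (\<theta> ^ j)" by (simp add: t_def power_int_minus)
  have g'0: "\<eta>' \<noteq> 0" using g0 theta_nz by (simp add: \<eta>'_def tp)
  have Tg': "T \<eta>' = g ^ p / N g"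
    using Tg j xi_nz by (simp add: \<eta>'_def tp T_mult T_inv T_pow T_theta)
  have "T (T \<eta>') = T g ^ p"
    using N_nz[OF gg0] T_N[OF gg0] by (simp add: Tg' T_div T_pow)
  then have TL': "pwc ((T^^2) \<eta>')" using T_nz[OF gg0] unfolding pwc_def by (auto simp: numeral_2_eq_2)
  have nL': "\<not> pwc ((T^^(2 - 1)) \<eta>')"
  proof
    assume "pwc ((T^^(2 - 1)) \<eta>')"
    then have "pwc (T \<eta>')" by simp
    moreover have "\<eta> = \<theta> powi (int j) * \<eta>'" using theta_nz by (simp add: \<eta>'_def tp)
    ultimately show False using hyp g'0 by blast
  qed
  have "(T^^(2 - 1)) \<eta>' = g ^ p / N g" using Tg' by simp
  then have "pspan p {N (inverse g)} = cycmod_fix p \<sigma> \<eta>'"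
    using final[OF g'0 _ TL' nL' gg0] by simp
  then show ?thesis using gg0 unfolding \<eta>'_def by (intro exI[of _ t] exI[of _ "inverse g"]) simp
qed

lemma smp_eq: "sigma_minus_one_pow \<sigma> j = T^^j"
  by (simp add: sigma_minus_one_pow_def T_def[abs_def])
lemma sc1: "same_class p y 1 \<longleftrightarrow> pwc y" by (simp add: same_class_def pwc_def)
lemma normK_eq: "normK p \<sigma> = N" by (rule ext) (simp add: normK_def N_def)

end

theorem lemma1:
  fixes p :: nat and F :: "'k::field set" and \<xi> a \<theta> \<gamma> :: 'k
    and \<sigma> :: "'k \<Rightarrow> 'k" and l :: nat
  assumes p_prime: "prime p" and p_gt2: "p > 2"
    and F_sub: "is_subfield F"
    and char: "of_nat p \<noteq> (0::'k)"
    and xi_F: "\<xi> \<in> F" and xi_root: "\<xi> ^ p = 1" and xi_ne1: "\<xi> \<noteq> 1"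
    and a_F: "a \<in> F" and a_ne0: "a \<noteq> 0" and a_nonpow: "\<not> (\<exists>b\<in>F. b ^ p = a)"
    and theta: "\<theta> ^ p = a"
    and K_gen: "gen_field F \<theta> = UNIV"
    and sigma_bij: "bij \<sigma>"
    and sigma_add: "\<And>x y. \<sigma> (x + y) = \<sigma> x + \<sigma> y"
    and sigma_mult: "\<And>x y. \<sigma> (x * y) = \<sigma> x * \<sigma> y"
    and sigma_F: "\<And>c. c \<in> F \<Longrightarrow> \<sigma> c = c"
    and sigma_theta: "\<sigma> \<theta> = \<xi> * \<theta>"
    and gamma_ne0: "\<gamma> \<noteq> 0"
    and gamma_nontriv: "\<not> same_class p \<gamma> 1"
    and l_in: "same_class p (sigma_minus_one_pow \<sigma> l \<gamma>) 1"
    and l_notin: "\<not> same_class p (sigma_minus_one_pow \<sigma> (l - 1) \<gamma>) 1"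
  shows "(3 \<le> l \<and> l \<le> p \<longrightarrow>
            (\<exists>\<alpha>. \<alpha> \<noteq> 0 \<and> pspan p {normK p \<sigma> \<alpha>} = cycmod_fix p \<sigma> \<gamma>))
       \<and> (l = 2 \<and>
          \<not> (\<exists>r::int. \<exists>\<gamma>1. \<gamma>1 \<noteq> 0 \<and> same_class p (\<sigma> \<gamma>1 / \<gamma>1) 1 \<and> \<gamma> = \<theta> powi r * \<gamma>1)
          \<longrightarrow> (\<exists>t::int. \<exists>\<alpha>. \<alpha> \<noteq> 0 \<and>
                 pspan p {normK p \<sigma> \<alpha>} = cycmod_fix p \<sigma> (\<theta> powi t * \<gamma>)))"
proof -
  interpret K: kum p F \<xi> a \<theta> \<sigma>
    by (rule kum.intro) (use assms in auto)
  have TL: "K.pwc ((K.T^^l) \<gamma>)" using l_in by (simp add: K.smp_eq K.sc1)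
  have nL: "\<not> K.pwc ((K.T^^(l - 1)) \<gamma>)" using l_notin by (simp add: K.smp_eq K.sc1)
  show ?thesis
  proof (intro conjI impI)
    assume "3 \<le> l \<and> l \<le> p"
    then show "\<exists>\<alpha>. \<alpha> \<noteq> 0 \<and> pspan p {normK p \<sigma> \<alpha>} = cycmod_fix p \<sigma> \<gamma>"
      using K.partA[OF gamma_ne0 _ TL nL] by (simp add: K.normK_eq)
  next
    assume h: "l = 2 \<and> \<not> (\<exists>r::int. \<exists>\<gamma>1. \<gamma>1 \<noteq> 0 \<and> same_class p (\<sigma> \<gamma>1 / \<gamma>1) 1 \<and> \<gamma> = \<theta> powi r * \<gamma>1)"
    then have l2: "l = 2" by simp
    have TL2: "K.pwc (K.T (K.T \<gamma>))" using TL l2 by (simp add: numeral_2_eq_2)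
    have nL2: "\<not> K.pwc (K.T \<gamma>)" using nL l2 by simp
    have hyp: "\<not> (\<exists>r::int. \<exists>\<gamma>1. \<gamma>1 \<noteq> 0 \<and> K.pwc (K.T \<gamma>1) \<and> \<gamma> = \<theta> powi r * \<gamma>1)"
      using h by (simp add: K.T_def K.sc1)
    show "\<exists>t::int. \<exists>\<alpha>. \<alpha> \<noteq> 0 \<and> pspan p {normK p \<sigma> \<alpha>} = cycmod_fix p \<sigma> (\<theta> powi t * \<gamma>)"
      using K.partB[OF gamma_ne0 TL2 nL2 hyp] by (simp add: K.normK_eq)
  qed
qed

end
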